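(* For every compact Hausdorff space $X$ there exist a zero-dimensional compact Hausdorff space $Z$ and a max-min Milyutin map $f\colon Z\to X$.
   Context: A max-min measure on a compact Hausdorff space $X$ is a functional $\mu\colon C(X)\to\mathbb R$ (not assumed continuous) such that $\mu(c_X)=c$ for constants $c$, $\mu(\varphi\vee\psi)=\mu(\varphi)\vee\mu(\psi)$, and $\mu(c\wedge\varphi)=c\wedge\mu(\varphi)$ for $c\in\mathbb R$. $J(X)$ is the set of max-min measures with the topology of pointwise convergence on $C(X)$; for continuous $f\colon X\to Y$, $J(f)(\mu)(\varphi)=\mu(\varphi\circ f)$. For a closed subset $A\subset X$, $J(A)$ is identified with its image $J(i)(J(A))\subset J(X)$ under the inclusion $i\colon A\to X$. A continuous surjection $f\colon Z\to X$ of compact Hausdorff spaces is a max-min Milyutin map if there exists a continuous map $s\colon X\to J(Z)$ with $s(x)\in J(f^{-1}(x))\subset J(Z)$ for every $x\in X$. A space is zero-dimensional if it has a base of clopen sets. *)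

theory Defs
  imports "HOL-Analysis.Analysis"
begin

text \<open>C(X): the real-valued continuous functions on the space X (as HOL functions;
  two such functions agreeing on the topspace represent the same element of C(X)).\<close>
definition Cfun :: "'a topology \<Rightarrow> ('a \<Rightarrow> real) set" where
  "Cfun X = {\<phi>. continuous_map X euclideanreal \<phi>}"

text \<open>A functional is represented by a HOL function on
  'a \<Rightarrow> real that is extensional on C(X) (value undefined outside C(X)) and
  well defined, i.e. depends only on the restriction of its argument to the topspace.\<close>
definition maxmin_measure :: "'a topology \<Rightarrow> (('a \<Rightarrow> real) \<Rightarrow> real) \<Rightarrow> bool" where
  "maxmin_measure X \<mu> \<longleftrightarrow>
     \<mu> \<in> extensional (Cfun X) \<and>
     (\<forall>\<phi>\<in>Cfun X. \<forall>\<psi>\<in>Cfun X. (\<forall>x\<in>topspace X. \<phi> x = \<psi> x) \<longrightarrow> \<mu> \<phi> = \<mu> \<psi>) \<and>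
     (\<forall>c::real. \<mu> (\<lambda>_. c) = c) \<and>
     (\<forall>\<phi>\<in>Cfun X. \<forall>\<psi>\<in>Cfun X. \<mu> (\<lambda>x. max (\<phi> x) (\<psi> x)) = max (\<mu> \<phi>) (\<mu> \<psi>)) \<and>
     (\<forall>c::real. \<forall>\<phi>\<in>Cfun X. \<mu> (\<lambda>x. min c (\<phi> x)) = min c (\<mu> \<phi>))"

definition Jset :: "'a topology \<Rightarrow> (('a \<Rightarrow> real) \<Rightarrow> real) set" where
  "Jset X = {\<mu>. maxmin_measure X \<mu>}"

definition Jtop :: "'a topology \<Rightarrow> (('a \<Rightarrow> real) \<Rightarrow> real) topology" where
  "Jtop X = subtopology (product_topology (\<lambda>_. euclideanreal) (Cfun X)) (Jset X)"

definition Jmap :: "'b topology \<Rightarrow> ('a \<Rightarrow> 'b) \<Rightarrow> (('a \<Rightarrow> real) \<Rightarrow> real) \<Rightarrow> (('b \<Rightarrow> real) \<Rightarrow> real)" where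
  "Jmap Y f \<mu> = restrict (\<lambda>\<phi>. \<mu> (\<phi> \<circ> f)) (Cfun Y)"

text \<open>J(A) for closed A \<subseteq> Z, identified with J(i)(J(A)) \<subseteq> J(Z), i the inclusion.\<close>
definition Jsub :: "'a topology \<Rightarrow> 'a set \<Rightarrow> (('a \<Rightarrow> real) \<Rightarrow> real) set" where
  "Jsub Z A = Jmap Z id ` Jset (subtopology Z A)"

definition maxmin_milyutin :: "'a topology \<Rightarrow> 'b topology \<Rightarrow> ('a \<Rightarrow> 'b) \<Rightarrow> bool" where
  "maxmin_milyutin Z X f \<longleftrightarrow>
     continuous_map Z X f \<and> f ` topspace Z = topspace X \<and>
     (\<exists>s. continuous_map X (Jtop Z) s \<and>
          (\<forall>x\<in>topspace X. s x \<in> Jsub Z {z \<in> topspace Z. f z = x}))"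

definition zero_dimensional :: "'a topology \<Rightarrow> bool" where
  "zero_dimensional X \<longleftrightarrow> neighbourhood_base_of (\<lambda>U. closedin X U \<and> openin X U) X"

end

theory Submission
  imports Defs
begin

definition dval :: "(nat \<Rightarrow> nat) \<Rightarrow> real" where
  "dval s = (\<Sum>n. real (s n) / 2^(n+2))"

definition dig :: "(nat \<Rightarrow> nat) \<Rightarrow> bool" where
  "dig s \<longleftrightarrow> (\<forall>n. s n \<le> 2)"

definition dgood :: "real \<Rightarrow> (nat \<Rightarrow> nat) \<Rightarrow> bool" where
  "dgood c s \<longleftrightarrow> (\<forall>j. c \<le> dval (\<lambda>n. s (n+j)) \<and> dval (\<lambda>n. s (n+j)) \<le> 1 - c)"

lemma dig_shift: "dig s \<Longrightarrow> dig (\<lambda>n. s (n+j))"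
  by (simp add: dig_def)

lemma dval_summable:
  assumes "dig s" shows "summable (\<lambda>n. real (s n) / 2^(n+2))"
proof (rule summable_comparison_test)
  show "\<exists>N. \<forall>n\<ge>N. norm (real (s n) / 2^(n+2)) \<le> (1/2)^(n+1)"
  proof (intro exI allI impI)
    fix n :: nat
    have "real (s n) \<le> 2" using assms by (simp add: dig_def)
    hence "real (s n) / 2^(n+2) \<le> 2 / 2^(n+2)" by (rule divide_right_mono) simp
    also have "\<dots> = (1/2)^(n+1)" by (simp add: power_one_over)
    finally show "norm (real (s n) / 2^(n+2)) \<le> (1/2)^(n+1)" by simp
  qed
  show "summable (\<lambda>n::nat. (1/2::real)^(n+1))"
    using summable_geometric[of "1/2::real"] by (simp add: summable_mult2 power_add)
qed

lemma dval_bounds: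
  assumes "dig s" shows "0 \<le> dval s" "dval s \<le> 1"
proof -
  have sm: "summable (\<lambda>n. real (s n) / 2^(n+2))" using dval_summable[OF assms] .
  show "0 \<le> dval s" unfolding dval_def by (rule suminf_nonneg[OF sm]) simp
  have "(\<lambda>n::nat. (1/2::real)^(n+1)) sums 1"
  proof -
    have "(\<lambda>n::nat. (1/2::real)^n) sums 2" using geometric_sums[of "1/2::real"] by simp
    hence "(\<lambda>n::nat. (1/2) * (1/2::real)^n) sums ((1/2)*2)" by (rule sums_mult)
    thus ?thesis by simp
  qed
  moreover have "\<And>n. real (s n) / 2^(n+2) \<le> (1/2)^(n+1)"
  proof -
    fix n :: nat
    have "real (s n) \<le> 2" using assms by (simp add: dig_def)
    hence "real (s n) / 2^(n+2) \<le> 2 / 2^(n+2)" by (rule divide_right_mono) simp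
    also have "\<dots> = (1/2)^(n+1)" by (simp add: power_one_over)
    finally show "real (s n) / 2^(n+2) \<le> (1/2)^(n+1)" .
  qed
  ultimately show "dval s \<le> 1" unfolding dval_def
    using sm suminf_le[of "\<lambda>n. real (s n) / 2^(n+2)" "\<lambda>n. (1/2)^(n+1)"]
    by (simp add: sums_iff)
qed

lemma dval_split:
  assumes "dig s"
  shows "dval s = (\<Sum>n<k. real (s n) / 2^(n+2)) + dval (\<lambda>n. s (n+k)) / 2^k"
proof -
  have sm: "summable (\<lambda>n. real (s n) / 2^(n+2))" using dval_summable[OF assms] .
  have sm2: "summable (\<lambda>n. real (s (n+k)) / 2^(n+2))" using dval_summable[OF dig_shift[OF assms]] .
  have "dval s = (\<Sum>n. real (s (n+k)) / 2^(n+k+2)) + (\<Sum>n<k. real (s n) / 2^(n+2))"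
    unfolding dval_def using suminf_split_initial_segment[OF sm, of k] by simp
  moreover have "(\<Sum>n. real (s (n+k)) / 2^(n+k+2)) = (\<Sum>n. real (s (n+k)) / 2^(n+2)) / 2^k"
  proof -
    have "(\<lambda>n. real (s (n+k)) / 2^(n+k+2)) = (\<lambda>n. real (s (n+k)) / 2^(n+2) / 2^k)"
      by (simp add: power_add field_simps)
    thus ?thesis using suminf_divide[OF sm2, of "2^k"] by simp
  qed
  ultimately show ?thesis unfolding dval_def by simp
qed

lemma dval_agree:
  assumes "dig s" "dig s'" "\<And>n. n < k \<Longrightarrow> s n = s' n"
  shows "\<bar>dval s - dval s'\<bar> \<le> 1 / 2^k"
proof -
  have e: "(\<Sum>n<k. real (s n) / 2^(n+2)) = (\<Sum>n<k. real (s' n) / 2^(n+2))"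
    using assms(3) by (intro sum.cong) auto
  have "dval s - dval s' = (dval (\<lambda>n. s (n+k)) - dval (\<lambda>n. s' (n+k))) / 2^k"
    using dval_split[OF assms(1), of k] dval_split[OF assms(2), of k] e by (simp add: diff_divide_distrib)
  moreover have "\<bar>dval (\<lambda>n. s (n+k)) - dval (\<lambda>n. s' (n+k))\<bar> \<le> 1"
    using dval_bounds[OF dig_shift[OF assms(1), of k]] dval_bounds[OF dig_shift[OF assms(2), of k]]
    by (simp add: abs_le_iff)
  ultimately show ?thesis by (simp add: divide_right_mono)
qed

definition gdig :: "real \<Rightarrow> nat" where
  "gdig z = (if z \<le> 3/8 then 0 else if z < 5/8 then 1 else 2)"

definition gT :: "real \<Rightarrow> real" where
  "gT z = 2 * z - real (gdig z) / 2"

definition gseq :: "real \<Rightarrow> nat \<Rightarrow> nat" where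
  "gseq z n = gdig ((gT ^^ n) z)"

lemma gT_inv:
  assumes "0 \<le> c" "c \<le> 1/4" "c \<le> z" "z \<le> 1 - c"
  shows "c \<le> gT z \<and> gT z \<le> 1 - c"
  using assms unfolding gT_def gdig_def by auto

lemma gT_iter_inv:
  assumes "0 \<le> c" "c \<le> 1/4" "c \<le> z" "z \<le> 1 - c"
  shows "c \<le> (gT ^^ n) z \<and> (gT ^^ n) z \<le> 1 - c"
proof (induction n)
  case 0 then show ?case using assms by simp
next
  case (Suc n) then show ?case using gT_inv[OF assms(1,2), of "(gT ^^ n) z"] by simp
qed

lemma dig_gseq: "dig (gseq z)"
  by (simp add: dig_def gseq_def gdig_def)

lemma gseq_partial:
  "z = (\<Sum>n<N. real (gseq z n) / 2^(n+2)) + (gT ^^ N) z / 2^N"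
proof (induction N)
  case 0 then show ?case by simp
next
  case (Suc N)
  have "(gT ^^ Suc N) z = 2 * (gT ^^ N) z - real (gseq z N) / 2"
    by (simp add: gT_def gseq_def)
  then have "(gT ^^ N) z / 2^N = real (gseq z N) / 2^(N+2) + (gT ^^ Suc N) z / 2^(Suc N)"
    by (simp add: field_simps)
  with Suc show ?case by simp
qed

lemma gseq_val:
  assumes "0 \<le> z" "z \<le> 1"
  shows "dval (gseq z) = z"
proof -
  have sm: "summable (\<lambda>n. real (gseq z n) / 2^(n+2))" using dval_summable[OF dig_gseq] .
  have b: "0 \<le> (gT ^^ N) z \<and> (gT ^^ N) z \<le> 1" for N
    using gT_iter_inv[of 0 z N] assms by simp
  have "(\<lambda>N. (gT ^^ N) z / 2^N) \<longlonglongrightarrow> 0"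
  proof (rule Lim_null_comparison[where g="\<lambda>N. (1/2::real)^N"])
    show "\<forall>\<^sub>F N in sequentially. norm ((gT ^^ N) z / 2^N) \<le> (1/2::real)^N"
      using b by (auto simp: power_one_over divide_right_mono)
    show "(\<lambda>N. (1/2::real)^N) \<longlonglongrightarrow> 0" by (rule LIMSEQ_power_zero) simp
  qed
  hence "(\<lambda>N. z - (gT ^^ N) z / 2^N) \<longlonglongrightarrow> z - 0" by (intro tendsto_diff) auto
  moreover have "(\<lambda>N. z - (gT ^^ N) z / 2^N) = (\<lambda>N. \<Sum>n<N. real (gseq z n) / 2^(n+2))"
    using gseq_partial[of z] by (auto simp: algebra_simps)
  ultimately have "(\<lambda>n. real (gseq z n) / 2^(n+2)) sums z" by (simp add: sums_def)
  thus ?thesis unfolding dval_def by (simp add: sums_unique[symmetric])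
qed

lemma gseq_shift: "(\<lambda>n. gseq z (n+j)) = gseq ((gT ^^ j) z)"
  by (rule ext) (simp add: gseq_def funpow_add)

lemma greedy:
  assumes "0 \<le> c" "c \<le> 1/4" "c \<le> z" "z \<le> 1 - c"
  shows "dig (gseq z) \<and> dval (gseq z) = z \<and> dgood c (gseq z)"
proof -
  have "dval (gseq z) = z" using assms by (intro gseq_val) auto
  moreover have "dgood c (gseq z)"
    unfolding dgood_def
  proof
    fix j
    have i: "c \<le> (gT ^^ j) z \<and> (gT ^^ j) z \<le> 1 - c" using gT_iter_inv[OF assms] .
    hence "dval (gseq ((gT ^^ j) z)) = (gT ^^ j) z" using assms by (intro gseq_val) auto
    thus "c \<le> dval (\<lambda>n. gseq z (n + j)) \<and> dval (\<lambda>n. gseq z (n + j)) \<le> 1 - c"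
      using i by (simp add: gseq_shift)
  qed
  ultimately show ?thesis using dig_gseq by simp
qed

lemma splice:
  assumes s0: "dig s0" "dgood c s0" and e: "0 < \<eta>" "\<eta> < c" "c \<le> 1/4"
    and y: "\<bar>y - dval s0\<bar> \<le> \<eta> / 2^k"
  shows "\<exists>s'. dig s' \<and> (\<forall>n<k. s' n = s0 n) \<and> dval s' = y \<and> dgood (c - \<eta>) s'"
proof -
  define z where "z = dval (\<lambda>n. s0 (n+k)) + (y - dval s0) * 2^k"
  have gk: "c \<le> dval (\<lambda>n. s0 (n+k)) \<and> dval (\<lambda>n. s0 (n+k)) \<le> 1 - c"
    using s0(2) by (simp add: dgood_def)
  have "\<bar>(y - dval s0) * 2^k\<bar> \<le> \<eta>"
    using y by (simp add: abs_mult le_divide_eq)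
  hence zb: "c - \<eta> \<le> z" "z \<le> 1 - (c - \<eta>)" using gk unfolding z_def by (auto simp: abs_le_iff)
  define s1 where "s1 = gseq z"
  have g1: "dig s1" "dval s1 = z" "dgood (c - \<eta>) s1"
    using greedy[of "c - \<eta>" z] zb e unfolding s1_def by auto
  define s' where "s' = (\<lambda>n. if n < k then s0 n else s1 (n - k))"
  have dig': "dig s'" using s0(1) g1(1) by (simp add: dig_def s'_def)
  have sh: "(\<lambda>n. s' (n + (k - j) + j)) = s1" if "j \<le> k" for j
    using that by (auto simp: s'_def)
  have key: "dval (\<lambda>n. s' (n+j)) - dval (\<lambda>n. s0 (n+j)) = (y - dval s0) * 2^k / 2^(k-j)"
    if "j \<le> k" for j
  proof -
    have a: "dval (\<lambda>n. s' (n+j)) = (\<Sum>n<k-j. real (s' (n+j)) / 2^(n+2)) + dval s1 / 2^(k-j)"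
      using dval_split[OF dig_shift[OF dig', of j], of "k-j"] sh[OF that] by simp
    have b: "dval (\<lambda>n. s0 (n+j)) = (\<Sum>n<k-j. real (s0 (n+j)) / 2^(n+2)) + dval (\<lambda>n. s0 (n+k)) / 2^(k-j)"
      using dval_split[OF dig_shift[OF s0(1), of j], of "k-j"] that by simp
    have c: "(\<Sum>n<k-j. real (s' (n+j)) / 2^(n+2)) = (\<Sum>n<k-j. real (s0 (n+j)) / 2^(n+2))"
      by (intro sum.cong) (auto simp: s'_def)
    show ?thesis using a b c g1(2) unfolding z_def by (simp add: add_divide_distrib)
  qed
  have "dval s' = y" using key[of 0] by simp
  moreover have "dgood (c - \<eta>) s'"
    unfolding dgood_def
  proof
    fix j
    show "c - \<eta> \<le> dval (\<lambda>n. s' (n + j)) \<and> dval (\<lambda>n. s' (n + j)) \<le> 1 - (c - \<eta>)"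
    proof (cases "j \<le> k")
      case True
      have "\<bar>(y - dval s0) * 2^k / 2^(k-j)\<bar> \<le> \<bar>(y - dval s0) * 2^k\<bar>"
      proof -
        have p: "(1::real) \<le> 2^(k-j)" by simp
        have "\<bar>(y - dval s0) * 2^k / 2^(k-j)\<bar> = \<bar>(y - dval s0) * 2^k\<bar> / 2^(k-j)"
          by (simp add: abs_divide)
        also have "\<dots> \<le> \<bar>(y - dval s0) * 2^k\<bar>"
          using p mult_left_mono[OF p, of "\<bar>(y - dval s0) * 2^k\<bar>"]
          by (simp add: divide_le_eq del: abs_mult)
        finally show ?thesis .
      qed
      also have "\<dots> \<le> \<eta>" using y by (simp add: abs_mult le_divide_eq)
      finally have "\<bar>dval (\<lambda>n. s' (n+j)) - dval (\<lambda>n. s0 (n+j))\<bar> \<le> \<eta>" using key[OF True] by simp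
      moreover have "c \<le> dval (\<lambda>n. s0 (n+j)) \<and> dval (\<lambda>n. s0 (n+j)) \<le> 1 - c"
        using s0(2) by (simp add: dgood_def)
      ultimately show ?thesis by (auto simp: abs_le_iff)
    next
      case False
      have "(\<lambda>n. s' (n + j)) = (\<lambda>n. s1 (n + (j - k)))"
        using False by (auto simp: s'_def)
      thus ?thesis using g1(3) by (simp add: dgood_def)
    qed
  qed
  moreover have "\<forall>n<k. s' n = s0 n" by (simp add: s'_def)
  ultimately show ?thesis using dig' by blast
qed


definition wmeas :: "'z topology \<Rightarrow> ('z \<times> real) set \<Rightarrow> ('z \<Rightarrow> real) \<Rightarrow> real" where
  "wmeas Y W = restrict (\<lambda>\<phi>. Sup {min (\<phi> p) t | p t. (p,t) \<in> W}) (Cfun Y)"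

lemma Cfun_bdd:
  assumes "compact_space Y" "\<phi> \<in> Cfun Y"
  shows "\<exists>B. \<forall>p\<in>topspace Y. \<phi> p \<le> B"
proof -
  have "compactin euclideanreal (\<phi> ` topspace Y)"
    using assms by (intro image_compactin) (auto simp: Cfun_def compact_space_def)
  hence "bounded (\<phi> ` topspace Y)" by (simp add: compact_imp_bounded)
  then obtain B where "\<forall>x\<in>\<phi> ` topspace Y. \<bar>x\<bar> \<le> B" by (meson bounded_real)
  hence "\<forall>p\<in>topspace Y. \<phi> p \<le> B" by (auto simp: abs_le_iff)
  thus ?thesis by blast
qed

lemma wmeas_bdd:
  assumes "compact_space Y" "\<phi> \<in> Cfun Y" "fst ` W \<subseteq> topspace Y"
  shows "bdd_above {min (\<phi> p) t | p t. (p,t) \<in> W}"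
proof -
  obtain B where "\<forall>p\<in>topspace Y. \<phi> p \<le> B" using Cfun_bdd[OF assms(1,2)] by blast
  hence "\<forall>x\<in>{min (\<phi> p) t | p t. (p,t) \<in> W}. x \<le> B"
    using assms(3) by force
  thus ?thesis by (meson bdd_above.unfold)
qed

lemma Cfun_const [simp]: "(\<lambda>_. c) \<in> Cfun Y"
  by (simp add: Cfun_def)

lemma Cfun_max: "\<phi> \<in> Cfun Y \<Longrightarrow> \<psi> \<in> Cfun Y \<Longrightarrow> (\<lambda>x. max (\<phi> x) (\<psi> x)) \<in> Cfun Y"
  by (simp add: Cfun_def continuous_map_real_max)

lemma Cfun_min: "\<phi> \<in> Cfun Y \<Longrightarrow> (\<lambda>x. min c (\<phi> x)) \<in> Cfun Y"
  by (simp add: Cfun_def continuous_map_real_min)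

lemma wmeas_Jset:
  assumes Y: "compact_space Y" and W: "fst ` W \<subseteq> topspace Y" and big: "\<And>c. \<exists>p t. (p,t) \<in> W \<and> c \<le> t"
  shows "wmeas Y W \<in> Jset Y"
proof -
  let ?S = "\<lambda>\<phi>. {min (\<phi> p) t | p t. (p,t) \<in> W}"
  have ne: "?S \<phi> \<noteq> {}" for \<phi> using big[of 0] by blast
  have bdd: "\<phi> \<in> Cfun Y \<Longrightarrow> bdd_above (?S \<phi>)" for \<phi> by (rule wmeas_bdd[OF Y _ W])
  have val: "\<phi> \<in> Cfun Y \<Longrightarrow> wmeas Y W \<phi> = Sup (?S \<phi>)" for \<phi> by (simp add: wmeas_def)
  have ext: "wmeas Y W \<in> extensional (Cfun Y)" by (simp add: wmeas_def)
  have wd: "\<forall>\<phi>\<in>Cfun Y. \<forall>\<psi>\<in>Cfun Y. (\<forall>x\<in>topspace Y. \<phi> x = \<psi> x) \<longrightarrow> wmeas Y W \<phi> = wmeas Y W \<psi>"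
  proof (intro ballI impI)
    fix \<phi> \<psi> assume "\<phi> \<in> Cfun Y" "\<psi> \<in> Cfun Y" "\<forall>x\<in>topspace Y. \<phi> x = \<psi> x"
    moreover have "?S \<phi> = ?S \<psi>" using W \<open>\<forall>x\<in>topspace Y. \<phi> x = \<psi> x\<close> by force
    ultimately show "wmeas Y W \<phi> = wmeas Y W \<psi>" by (simp add: val)
  qed
  have const: "wmeas Y W (\<lambda>_. c) = c" for c
  proof -
    obtain p t where pt: "(p,t) \<in> W" "c \<le> t" using big by blast
    have "Sup (?S (\<lambda>_. c)) = c"
    proof (rule cSup_eq_maximum)
      show "c \<in> ?S (\<lambda>_. c)" using pt by (auto intro!: exI[of _ p] exI[of _ t])
    qed auto
    thus ?thesis by (simp add: val)
  qed
  have mx: "wmeas Y W (\<lambda>x. max (\<phi> x) (\<psi> x)) = max (wmeas Y W \<phi>) (wmeas Y W \<psi>)"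
    if "\<phi> \<in> Cfun Y" "\<psi> \<in> Cfun Y" for \<phi> \<psi>
  proof -
    have m: "(\<lambda>x. max (\<phi> x) (\<psi> x)) \<in> Cfun Y" using that by (rule Cfun_max)
    have "Sup (?S (\<lambda>x. max (\<phi> x) (\<psi> x))) = max (Sup (?S \<phi>)) (Sup (?S \<psi>))"
    proof (rule antisym)
      show "Sup (?S (\<lambda>x. max (\<phi> x) (\<psi> x))) \<le> max (Sup (?S \<phi>)) (Sup (?S \<psi>))"
      proof (rule cSup_least)
        show "?S (\<lambda>x. max (\<phi> x) (\<psi> x)) \<noteq> {}" by (rule ne)
        fix x assume "x \<in> ?S (\<lambda>x. max (\<phi> x) (\<psi> x))"
        then obtain p t where pt: "(p,t) \<in> W" "x = min (max (\<phi> p) (\<psi> p)) t" by blast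
        have "min (\<phi> p) t \<le> Sup (?S \<phi>)" using pt bdd[OF that(1)] by (intro cSup_upper) auto
        moreover have "min (\<psi> p) t \<le> Sup (?S \<psi>)" using pt bdd[OF that(2)] by (intro cSup_upper) auto
        ultimately show "x \<le> max (Sup (?S \<phi>)) (Sup (?S \<psi>))" using pt(2) by linarith
      qed
      have "Sup (?S \<phi>) \<le> Sup (?S (\<lambda>x. max (\<phi> x) (\<psi> x)))"
      proof (rule cSup_least)
        show "?S \<phi> \<noteq> {}" by (rule ne)
        fix x assume "x \<in> ?S \<phi>"
        then obtain p t where pt: "(p,t) \<in> W" "x = min (\<phi> p) t" by blast
        have "min (max (\<phi> p) (\<psi> p)) t \<le> Sup (?S (\<lambda>x. max (\<phi> x) (\<psi> x)))"
          using pt bdd[OF m] by (intro cSup_upper) auto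
        thus "x \<le> Sup (?S (\<lambda>x. max (\<phi> x) (\<psi> x)))" using pt(2) by linarith
      qed
      moreover have "Sup (?S \<psi>) \<le> Sup (?S (\<lambda>x. max (\<phi> x) (\<psi> x)))"
      proof (rule cSup_least)
        show "?S \<psi> \<noteq> {}" by (rule ne)
        fix x assume "x \<in> ?S \<psi>"
        then obtain p t where pt: "(p,t) \<in> W" "x = min (\<psi> p) t" by blast
        have "min (max (\<phi> p) (\<psi> p)) t \<le> Sup (?S (\<lambda>x. max (\<phi> x) (\<psi> x)))"
          using pt bdd[OF m] by (intro cSup_upper) auto
        thus "x \<le> Sup (?S (\<lambda>x. max (\<phi> x) (\<psi> x)))" using pt(2) by linarith
      qed
      ultimately show "max (Sup (?S \<phi>)) (Sup (?S \<psi>)) \<le> Sup (?S (\<lambda>x. max (\<phi> x) (\<psi> x)))"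
        by simp
    qed
    thus ?thesis using m that by (simp add: val)
  qed
  have mn: "wmeas Y W (\<lambda>x. min c (\<phi> x)) = min c (wmeas Y W \<phi>)"
    if "\<phi> \<in> Cfun Y" for c \<phi>
  proof -
    have m: "(\<lambda>x. min c (\<phi> x)) \<in> Cfun Y" using that by (rule Cfun_min)
    have "Sup (?S (\<lambda>x. min c (\<phi> x))) = min c (Sup (?S \<phi>))"
    proof (rule antisym)
      show "Sup (?S (\<lambda>x. min c (\<phi> x))) \<le> min c (Sup (?S \<phi>))"
      proof (rule cSup_least)
        show "?S (\<lambda>x. min c (\<phi> x)) \<noteq> {}" by (rule ne)
        fix x assume "x \<in> ?S (\<lambda>x. min c (\<phi> x))"
        then obtain p t where pt: "(p,t) \<in> W" "x = min (min c (\<phi> p)) t" by blast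
        have "min (\<phi> p) t \<le> Sup (?S \<phi>)" using pt bdd[OF that] by (intro cSup_upper) auto
        thus "x \<le> min c (Sup (?S \<phi>))" using pt(2) by linarith
      qed
      show "min c (Sup (?S \<phi>)) \<le> Sup (?S (\<lambda>x. min c (\<phi> x)))"
      proof (cases "c \<le> Sup (?S (\<lambda>x. min c (\<phi> x)))")
        case True then show ?thesis by simp
      next
        case False
        have "Sup (?S \<phi>) \<le> Sup (?S (\<lambda>x. min c (\<phi> x)))"
        proof (rule cSup_least)
          show "?S \<phi> \<noteq> {}" by (rule ne)
          fix x assume "x \<in> ?S \<phi>"
          then obtain p t where pt: "(p,t) \<in> W" "x = min (\<phi> p) t" by blast
          have "min (min c (\<phi> p)) t \<le> Sup (?S (\<lambda>x. min c (\<phi> x)))"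
            using pt bdd[OF m] by (intro cSup_upper) auto
          thus "x \<le> Sup (?S (\<lambda>x. min c (\<phi> x)))" using pt(2) False by linarith
        qed
        thus ?thesis by simp
      qed
    qed
    thus ?thesis using m that by (simp add: val)
  qed
  show ?thesis unfolding Jset_def maxmin_measure_def
    using ext wd const mx mn by blast
qed

lemma wmeas_Jsub:
  assumes Y: "compact_space Y" and A: "closedin Y A" and W: "fst ` W \<subseteq> A"
    and big: "\<And>c. \<exists>p t. (p,t) \<in> W \<and> c \<le> t"
  shows "wmeas Y W \<in> Jsub Y A"
proof -
  have cA: "compact_space (subtopology Y A)"
    using A Y by (simp add: closedin_compact_space compact_space_subtopology)
  have "fst ` W \<subseteq> topspace (subtopology Y A)" using W closedin_subset[OF A] by auto
  hence J: "wmeas (subtopology Y A) W \<in> Jset (subtopology Y A)" using wmeas_Jset[OF cA _ big] by blast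
  have "Jmap Y id (wmeas (subtopology Y A) W) = wmeas Y W"
  proof (rule ext)
    fix \<phi>
    show "Jmap Y id (wmeas (subtopology Y A) W) \<phi> = wmeas Y W \<phi>"
    proof (cases "\<phi> \<in> Cfun Y")
      case True
      hence "\<phi> \<in> Cfun (subtopology Y A)" by (simp add: Cfun_def continuous_map_from_subtopology)
      thus ?thesis using True by (simp add: Jmap_def wmeas_def)
    qed (simp add: Jmap_def wmeas_def)
  qed
  thus ?thesis using J unfolding Jsub_def by (metis image_eqI)
qed


lemma cont_real_local:
  assumes "\<And>p \<epsilon>. p \<in> topspace T \<Longrightarrow> \<epsilon> > 0 \<Longrightarrow> \<exists>U. openin T U \<and> p \<in> U \<and> (\<forall>q\<in>U. \<bar>f q - f p\<bar> < \<epsilon>)"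
  shows "continuous_map T euclideanreal f"
  unfolding continuous_map_upper_lower_semicontinuous_lt
proof (intro conjI allI)
  fix a
  show "openin T {x \<in> topspace T. a < f x}"
  proof (subst openin_subopen, intro ballI)
    fix p assume p: "p \<in> {x \<in> topspace T. a < f x}"
    then obtain U where U: "openin T U" "p \<in> U" "\<forall>q\<in>U. \<bar>f q - f p\<bar> < f p - a"
      using assms[of p "f p - a"] by auto
    have "U \<subseteq> {x \<in> topspace T. a < f x}" using U openin_subset[OF U(1)] by force
    thus "\<exists>T'. openin T T' \<and> p \<in> T' \<and> T' \<subseteq> {x \<in> topspace T. a < f x}" using U by blast
  qed
  show "openin T {x \<in> topspace T. f x < a}"
  proof (subst openin_subopen, intro ballI)
    fix p assume p: "p \<in> {x \<in> topspace T. f x < a}"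
    then obtain U where U: "openin T U" "p \<in> U" "\<forall>q\<in>U. \<bar>f q - f p\<bar> < a - f p"
      using assms[of p "a - f p"] by auto
    have "U \<subseteq> {x \<in> topspace T. f x < a}" using U openin_subset[OF U(1)] by force
    thus "\<exists>T'. openin T T' \<and> p \<in> T' \<and> T' \<subseteq> {x \<in> topspace T. f x < a}" using U by blast
  qed
qed

lemma openin_finite_all:
  assumes "finite F" "\<And>i. i \<in> F \<Longrightarrow> openin X {x \<in> topspace X. P i x}"
  shows "openin X {x \<in> topspace X. \<forall>i\<in>F. P i x}"
  using assms
proof (induction F rule: finite_induct)
  case empty then show ?case by simp
next
  case (insert j F)
  have "{x \<in> topspace X. \<forall>i\<in>insert j F. P i x} =
        {x \<in> topspace X. P j x} \<inter> {x \<in> topspace X. \<forall>i\<in>F. P i x}" by auto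
  moreover have "openin X {x \<in> topspace X. P j x}" using insert.prems by simp
  moreover have "openin X {x \<in> topspace X. \<forall>i\<in>F. P i x}" using insert.IH insert.prems by simp
  ultimately show ?case by (simp only:) (rule openin_Int)
qed

lemma closedin_all:
  assumes "\<And>i. i \<in> K \<Longrightarrow> closedin X {x \<in> topspace X. P i x}"
  shows "closedin X {x \<in> topspace X. \<forall>i\<in>K. P i x}"
proof (cases "K = {}")
  case True then show ?thesis by simp
next
  case False
  have "{x \<in> topspace X. \<forall>i\<in>K. P i x} = \<Inter> ((\<lambda>i. {x \<in> topspace X. P i x}) ` K)"
    using False by auto
  moreover have "closedin X (\<Inter> ((\<lambda>i. {x \<in> topspace X. P i x}) ` K))"
  proof (rule closedin_Inter)
    show "(\<lambda>i. {x \<in> topspace X. P i x}) ` K \<noteq> {}" using False by simp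
    fix S assume "S \<in> (\<lambda>i. {x \<in> topspace X. P i x}) ` K"
    then obtain i where "i \<in> K" "S = {x \<in> topspace X. P i x}" by blast
    thus "closedin X S" using assms by simp
  qed
  ultimately show ?thesis by simp
qed

lemma zero_dim_subtopology:
  assumes "zero_dimensional X"
  shows "zero_dimensional (subtopology X S)"
  unfolding zero_dimensional_def neighbourhood_base_of
proof (intro allI impI)
  fix W x assume "openin (subtopology X S) W \<and> x \<in> W"
  then obtain W' where W': "openin X W'" "W = W' \<inter> S" "x \<in> W" by (auto simp: openin_subtopology)
  have zz: "\<forall>W x. openin X W \<and> x \<in> W \<longrightarrow> (\<exists>U V. openin X U \<and> (closedin X V \<and> openin X V) \<and> x \<in> U \<and> U \<subseteq> V \<and> V \<subseteq> W)"
    using assms unfolding zero_dimensional_def neighbourhood_base_of .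
  obtain U V where UV: "openin X U" "closedin X V" "openin X V" "x \<in> U" "U \<subseteq> V" "V \<subseteq> W'"
    using zz[rule_format, of W' x] W' by auto
  show "\<exists>U V. openin (subtopology X S) U \<and> (closedin (subtopology X S) V \<and> openin (subtopology X S) V) \<and> x \<in> U \<and> U \<subseteq> V \<and> V \<subseteq> W"
  proof (intro exI conjI)
    show "openin (subtopology X S) (U \<inter> S)" using UV by (auto simp: openin_subtopology)
    show "openin (subtopology X S) (V \<inter> S)" using UV by (auto simp: openin_subtopology)
    show "closedin (subtopology X S) (V \<inter> S)" using UV by (auto simp: closedin_subtopology)
    show "x \<in> U \<inter> S" using UV W' by simp
    show "U \<inter> S \<subseteq> V \<inter> S" using UV by auto
    show "V \<inter> S \<subseteq> W" using UV W' by auto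
  qed
qed

lemma zero_dim_homeomorphic_map:
  assumes h: "homeomorphic_map X Y f" and z: "zero_dimensional X"
  shows "zero_dimensional Y"
  unfolding zero_dimensional_def neighbourhood_base_of
proof (intro allI impI)
  fix W y assume Wy: "openin Y W \<and> y \<in> W"
  obtain g where g: "homeomorphic_maps X Y f g" using h homeomorphic_map_maps by blast
  have cf: "continuous_map X Y f" and cg: "continuous_map Y X g"
    and fg: "\<forall>x \<in> topspace X. g(f x) = x" "\<forall>y \<in> topspace Y. f(g y) = y"
    using g by (auto simp: homeomorphic_maps_def)
  have yY: "y \<in> topspace Y" using Wy openin_subset by blast
  let ?W' = "{x \<in> topspace X. f x \<in> W}"
  have "openin X ?W'" using Wy cf by (simp add: openin_continuous_map_preimage)
  moreover have "g y \<in> ?W'" using yY fg cg Wy by (auto simp: continuous_map_def)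
  moreover have zz: "\<forall>W x. openin X W \<and> x \<in> W \<longrightarrow> (\<exists>U V. openin X U \<and> (closedin X V \<and> openin X V) \<and> x \<in> U \<and> U \<subseteq> V \<and> V \<subseteq> W)"
    using z unfolding zero_dimensional_def neighbourhood_base_of .
  ultimately obtain U V where UV: "openin X U" "closedin X V" "openin X V" "g y \<in> U" "U \<subseteq> V" "V \<subseteq> ?W'"
    by meson
  have sub: "U \<subseteq> topspace X" "V \<subseteq> topspace X" using UV by (auto dest: openin_subset)
  show "\<exists>U V. openin Y U \<and> (closedin Y V \<and> openin Y V) \<and> y \<in> U \<and> U \<subseteq> V \<and> V \<subseteq> W"
  proof (intro exI conjI)
    show "openin Y (f ` U)" using homeomorphic_map_openness[OF h sub(1)] UV by simp
    show "openin Y (f ` V)" using homeomorphic_map_openness[OF h sub(2)] UV by simp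
    show "closedin Y (f ` V)" using homeomorphic_map_closedness[OF h sub(2)] UV by simp
    show "y \<in> f ` U" using UV(4) fg yY by (metis image_eqI)
    show "f ` U \<subseteq> f ` V" using UV by auto
    show "f ` V \<subseteq> W" using UV by auto
  qed
qed


definition row :: "('i \<times> nat \<Rightarrow> nat) \<Rightarrow> 'i \<Rightarrow> nat \<Rightarrow> nat" where
  "row p i = (\<lambda>n. p (i,n))"

definition gg :: "real \<Rightarrow> real" where
  "gg t = 1 / (4 + 4 * exp (- t))"

lemma gg_pos: "0 < gg t"
  unfolding gg_def by (simp add: add_pos_pos)

lemma gg_lt: "gg t < 1/4"
proof -
  have "0 < 4 + 4 * exp (- t)" using exp_gt_zero[of "-t"] by linarith
  thus ?thesis unfolding gg_def by (simp add: divide_simps)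
qed

lemma gg_mono: "s < t \<Longrightarrow> gg s < gg t"
  unfolding gg_def by (simp add: divide_simps add_pos_pos)

definition DD :: "'i set \<Rightarrow> ('i \<times> nat \<Rightarrow> nat) topology" where
  "DD I = product_topology (\<lambda>_. discrete_topology {0,1,2}) (I \<times> UNIV)"

lemma topspace_DD: "topspace (DD I) = PiE (I \<times> UNIV) (\<lambda>_. {0,1,2})"
  by (simp add: DD_def)

lemma DD_compact: "compact_space (DD I)"
  unfolding DD_def by (simp add: compact_space_product_topology compact_space_discrete_topology)

lemma DD_Hausdorff: "Hausdorff_space (DD I)"
  unfolding DD_def by (simp add: Hausdorff_space_product_topology)

lemma DD_zero_dim: "zero_dimensional (DD I)"
  unfolding zero_dimensional_def neighbourhood_base_of
proof (intro allI impI)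
  fix W x assume Wx: "openin (DD I) W \<and> x \<in> W"
  then obtain X' where X': "x \<in> PiE (I \<times> UNIV) X'" "\<forall>i. openin (discrete_topology {0,1,2::nat}) (X' i)"
     "finite {i. X' i \<noteq> topspace (discrete_topology {0,1,2::nat})}" "PiE (I \<times> UNIV) X' \<subseteq> W"
    using product_topology_open_contains_basis[of "\<lambda>_. discrete_topology {0,1,2::nat}" "I \<times> UNIV" W x]
    unfolding DD_def by auto
  have o: "openin (DD I) (PiE (I \<times> UNIV) X')"
    unfolding DD_def by (rule product_topology_basis) (use X' in auto)
  have c: "closedin (DD I) (PiE (I \<times> UNIV) X')"
    unfolding DD_def closedin_product_topology using X'(2) by simp
  show "\<exists>U V. openin (DD I) U \<and> (closedin (DD I) V \<and> openin (DD I) V) \<and> x \<in> U \<and> U \<subseteq> V \<and> V \<subseteq> W"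
    using o c X'(1,4) by (intro exI[of _ "PiE (I \<times> UNIV) X'"]) simp
qed

lemma DD_val: "p \<in> topspace (DD I) \<Longrightarrow> i \<in> I \<Longrightarrow> p (i,n) \<in> {0,1,2}"
  unfolding topspace_DD by (rule PiE_mem) auto

lemma dig_row: "p \<in> topspace (DD I) \<Longrightarrow> i \<in> I \<Longrightarrow> dig (row p i)"
  unfolding dig_def row_def
proof
  fix n assume "p \<in> topspace (DD I)" "i \<in> I"
  hence "p (i,n) \<in> {0,1,2}" by (rule DD_val)
  thus "p (i,n) \<le> 2" by auto
qed

lemma cyl_open:
  assumes "p \<in> topspace (DD I)" "finite F" "F \<subseteq> I \<times> UNIV"
  shows "openin (DD I) {q \<in> topspace (DD I). \<forall>m\<in>F. q m = p m}"
proof -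
  have "{q \<in> topspace (DD I). \<forall>m\<in>F. q m = p m} = PiE (I \<times> UNIV) (\<lambda>m. if m \<in> F then {p m} else {0,1,2})"
  proof (intro set_eqI iffI)
    fix q assume q: "q \<in> {q \<in> topspace (DD I). \<forall>m\<in>F. q m = p m}"
    show "q \<in> PiE (I \<times> UNIV) (\<lambda>m. if m \<in> F then {p m} else {0,1,2})"
      unfolding PiE_iff
    proof (intro conjI ballI)
      show "q \<in> extensional (I \<times> UNIV)" using q by (simp add: topspace_DD PiE_iff)
      fix m assume m: "m \<in> I \<times> (UNIV::nat set)"
      show "q m \<in> (if m \<in> F then {p m} else {0,1,2})"
      proof (cases "m \<in> F")
        case True then show ?thesis using q by simp
      next
        case False
        have "q m \<in> {0,1,2}" using q m unfolding topspace_DD by (intro PiE_mem[of q]) auto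
        then show ?thesis using False by simp
      qed
    qed
  next
    fix q assume q: "q \<in> PiE (I \<times> UNIV) (\<lambda>m. if m \<in> F then {p m} else {0,1,2})"
    have "q \<in> topspace (DD I)"
      unfolding topspace_DD PiE_iff
    proof (intro conjI ballI)
      show "q \<in> extensional (I \<times> UNIV)" using q by (simp add: PiE_iff)
      fix m assume m: "m \<in> I \<times> (UNIV::nat set)"
      have qm: "q m \<in> (if m \<in> F then {p m} else {0,1,2})" using q m by (intro PiE_mem[of q]) auto
      have "p m \<in> {0,1,2}" using assms(1) m unfolding topspace_DD by (intro PiE_mem[of p]) auto
      thus "q m \<in> {0,1,2}" using qm by (auto split: if_splits)
    qed
    moreover have "\<forall>m\<in>F. q m = p m"
    proof
      fix m assume mF: "m \<in> F"
      hence "m \<in> I \<times> UNIV" using assms(3) by auto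
      from PiE_mem[OF q this] show "q m = p m" using mF by simp
    qed
    ultimately show "q \<in> {q \<in> topspace (DD I). \<forall>m\<in>F. q m = p m}" by simp
  qed
  moreover have "openin (DD I) (PiE (I \<times> UNIV) (\<lambda>m. if m \<in> F then {p m} else {0,1,2}))"
    unfolding DD_def
  proof (rule product_topology_basis)
    show "openin (discrete_topology {0, 1, 2}) (if m \<in> F then {p m} else {0, 1, 2})" for m
    proof (cases "m \<in> F")
      case True
      hence "m \<in> I \<times> UNIV" using assms(3) by auto
      hence "p m \<in> {0,1,2}" using assms(1) unfolding topspace_DD by (rule PiE_mem[rotated])
      then show ?thesis using True by simp
    qed simp
    show "finite {m. (if m \<in> F then {p m} else {0, 1, 2}) \<noteq> topspace (discrete_topology {0, 1, 2::nat})}"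
      by (rule finite_subset[OF _ assms(2)]) auto
  qed
  ultimately show ?thesis by simp
qed

lemma DD_cont_row:
  assumes "i \<in> I"
  shows "continuous_map (DD I) euclideanreal (\<lambda>p. dval (\<lambda>n. p (i, n + j)))"
proof (rule cont_real_local)
  fix p and \<epsilon> :: real assume p: "p \<in> topspace (DD I)" and e: "\<epsilon> > 0"
  obtain k where k: "(1/2::real)^k < \<epsilon>" using real_arch_pow_inv[OF e, of "1/2"] by auto
  let ?F = "(\<lambda>n. (i, n+j)) ` {..<k}"
  have "finite ?F" "?F \<subseteq> I \<times> UNIV" using assms by auto
  note U = cyl_open[OF p this]
  show "\<exists>U. openin (DD I) U \<and> p \<in> U \<and> (\<forall>q\<in>U. \<bar>dval (\<lambda>n. q (i, n + j)) - dval (\<lambda>n. p (i, n + j))\<bar> < \<epsilon>)"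
  proof (intro exI conjI ballI)
    show "openin (DD I) {q \<in> topspace (DD I). \<forall>m\<in>?F. q m = p m}" by (rule U)
    show "p \<in> {q \<in> topspace (DD I). \<forall>m\<in>?F. q m = p m}" using p by simp
    fix q assume q: "q \<in> {q \<in> topspace (DD I). \<forall>m\<in>?F. q m = p m}"
    have dq: "dig (\<lambda>n. q (i, n + j))" using dig_shift[OF dig_row[of q I i], of j] q assms by (simp add: row_def)
    have dp: "dig (\<lambda>n. p (i, n + j))" using dig_shift[OF dig_row[of p I i], of j] p assms by (simp add: row_def)
    have "\<bar>dval (\<lambda>n. q (i, n + j)) - dval (\<lambda>n. p (i, n + j))\<bar> \<le> 1/2^k"
      by (rule dval_agree[OF dq dp]) (use q in auto)
    also have "\<dots> < \<epsilon>" using k by (simp add: power_one_over)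
    finally show "\<bar>dval (\<lambda>n. q (i, n + j)) - dval (\<lambda>n. p (i, n + j))\<bar> < \<epsilon>" .
  qed
qed

lemma DD_cont_row0:
  assumes "i \<in> I"
  shows "continuous_map (DD I) euclideanreal (\<lambda>p. dval (row p i))"
  using DD_cont_row[OF assms, of 0] by (simp add: row_def)


locale core =
  fixes X :: "'a topology" and I :: "'i set" and u :: "'i \<Rightarrow> 'a \<Rightarrow> real"
  assumes cX: "compact_space X" and hX: "Hausdorff_space X"
    and uc: "\<And>i. i \<in> I \<Longrightarrow> continuous_map X euclideanreal (u i)"
    and ur: "\<And>i x. i \<in> I \<Longrightarrow> x \<in> topspace X \<Longrightarrow> 1/4 \<le> u i x \<and> u i x \<le> 3/4"
    and us: "\<And>x y. x \<in> topspace X \<Longrightarrow> y \<in> topspace X \<Longrightarrow> x \<noteq> y \<Longrightarrow> \<exists>i\<in>I. u i x \<noteq> u i y"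
begin

definition rep :: "('i \<times> nat \<Rightarrow> nat) \<Rightarrow> 'a \<Rightarrow> bool" where
  "rep p x \<longleftrightarrow> x \<in> topspace X \<and> (\<forall>i\<in>I. dval (row p i) = u i x)"

definition Zs :: "('i \<times> nat \<Rightarrow> nat) set" where
  "Zs = {p \<in> topspace (DD I). \<exists>x. rep p x}"

definition ZZ :: "('i \<times> nat \<Rightarrow> nat) topology" where
  "ZZ = subtopology (DD I) Zs"

definition fZ :: "('i \<times> nat \<Rightarrow> nat) \<Rightarrow> 'a" where
  "fZ p = (THE x. rep p x)"

definition WW :: "'a \<Rightarrow> (('i \<times> nat \<Rightarrow> nat) \<times> real) set" where
  "WW x = {(p,t). p \<in> Zs \<and> fZ p = x \<and> (\<exists>c. gg t < c \<and> (\<forall>i\<in>I. dgood c (row p i)))}"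

lemma rep_unique: "rep p x \<Longrightarrow> rep p y \<Longrightarrow> x = y"
proof (rule ccontr)
  assume r: "rep p x" "rep p y" "x \<noteq> y"
  then obtain i where "i \<in> I" "u i x \<noteq> u i y" using us unfolding rep_def by blast
  thus False using r unfolding rep_def by auto
qed

lemma fZ_eq: "rep p x \<Longrightarrow> fZ p = x"
  unfolding fZ_def by (rule the_equality) (auto intro: rep_unique)

lemma fZ: "p \<in> Zs \<Longrightarrow> rep p (fZ p)"
  unfolding Zs_def using fZ_eq by auto

lemma Zs_sub: "Zs \<subseteq> topspace (DD I)"
  unfolding Zs_def by auto

lemma topspace_ZZ: "topspace ZZ = Zs"
  unfolding ZZ_def using Zs_sub by auto

lemma closed_rep:
  assumes K: "closedin X K"
  shows "closedin (DD I) {p \<in> topspace (DD I). \<exists>x\<in>K. rep p x}"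
proof -
  define V where "V p = restrict (\<lambda>i. dval (row p i)) I" for p :: "'i \<times> nat \<Rightarrow> nat"
  define U where "U x = restrict (\<lambda>i. u i x) I" for x
  have cV: "continuous_map (DD I) (product_topology (\<lambda>_. euclideanreal) I) V"
    unfolding continuous_map_componentwise
  proof (intro conjI ballI)
    show "V ` topspace (DD I) \<subseteq> extensional I" by (auto simp: V_def)
    fix k assume k: "k \<in> I"
    have "(\<lambda>x. V x k) = (\<lambda>p. dval (row p k))" using k by (simp add: V_def)
    thus "continuous_map (DD I) euclideanreal (\<lambda>x. V x k)" using DD_cont_row0[OF k] by simp
  qed
  have cU: "continuous_map X (product_topology (\<lambda>_. euclideanreal) I) U"
    unfolding continuous_map_componentwise
  proof (intro conjI ballI)
    show "U ` topspace X \<subseteq> extensional I" by (auto simp: U_def)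
    fix k assume k: "k \<in> I"
    have "(\<lambda>x. U x k) = u k" using k by (simp add: U_def)
    thus "continuous_map X euclideanreal (\<lambda>x. U x k)" using uc[OF k] by simp
  qed
  have "compactin X K" using closedin_compact_space[OF cX K] .
  hence "compactin (product_topology (\<lambda>_. euclideanreal) I) (U ` K)"
    using cU by (rule image_compactin)
  hence cl: "closedin (product_topology (\<lambda>_. euclideanreal) I) (U ` K)"
    by (intro compactin_imp_closedin) (auto simp: Hausdorff_space_product_topology)
  have Ksub: "K \<subseteq> topspace X" using closedin_subset[OF K] .
  have "{p \<in> topspace (DD I). \<exists>x\<in>K. rep p x} = {p \<in> topspace (DD I). V p \<in> U ` K}"
  proof -
    have Vx: "(\<forall>i\<in>I. dval (row p i) = u i x) \<longleftrightarrow> V p = U x" for p x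
    proof
      assume "\<forall>i\<in>I. dval (row p i) = u i x"
      thus "V p = U x" unfolding V_def U_def by (intro restrict_ext) simp
    next
      assume e: "V p = U x"
      show "\<forall>i\<in>I. dval (row p i) = u i x"
      proof
        fix i assume "i \<in> I"
        thus "dval (row p i) = u i x" using fun_cong[OF e, of i] by (simp add: V_def U_def)
      qed
    qed
    show ?thesis
    proof (intro set_eqI iffI)
      fix p assume "p \<in> {p \<in> topspace (DD I). \<exists>x\<in>K. rep p x}"
      then obtain x where "p \<in> topspace (DD I)" "x \<in> K" "V p = U x" unfolding rep_def Vx by blast
      thus "p \<in> {p \<in> topspace (DD I). V p \<in> U ` K}" by auto
    next
      fix p assume "p \<in> {p \<in> topspace (DD I). V p \<in> U ` K}"
      then obtain x where "p \<in> topspace (DD I)" "x \<in> K" "V p = U x" by auto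
      thus "p \<in> {p \<in> topspace (DD I). \<exists>x\<in>K. rep p x}" unfolding rep_def Vx using Ksub by auto
    qed
  qed
  thus ?thesis using closedin_continuous_map_preimage[OF cV cl] by simp
qed

lemma Zs_closed: "closedin (DD I) Zs"
proof -
  have "Zs = {p \<in> topspace (DD I). \<exists>x\<in>topspace X. rep p x}"
    unfolding Zs_def rep_def by auto
  thus ?thesis using closed_rep[of "topspace X"] by simp
qed

lemma ZZ_compact: "compact_space ZZ"
  unfolding ZZ_def using closedin_compact_space[OF DD_compact Zs_closed] by (rule compact_space_subtopology)

lemma ZZ_Hausdorff: "Hausdorff_space ZZ"
  unfolding ZZ_def using DD_Hausdorff by (rule Hausdorff_space_subtopology)

lemma ZZ_zero_dim: "zero_dimensional ZZ"
  unfolding ZZ_def using DD_zero_dim by (rule zero_dim_subtopology)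

lemma fZ_cont: "continuous_map ZZ X fZ"
  unfolding continuous_map_closedin
proof (intro conjI allI impI)
  show "fZ \<in> topspace ZZ \<rightarrow> topspace X" using fZ by (auto simp: topspace_ZZ rep_def)
  fix C assume C: "closedin X C"
  have "{x \<in> topspace ZZ. fZ x \<in> C} = {p \<in> topspace (DD I). \<exists>x\<in>C. rep p x} \<inter> Zs"
  proof (intro set_eqI iffI)
    fix p assume "p \<in> {x \<in> topspace ZZ. fZ x \<in> C}"
    hence "p \<in> Zs" "fZ p \<in> C" by (auto simp: topspace_ZZ)
    thus "p \<in> {p \<in> topspace (DD I). \<exists>x\<in>C. rep p x} \<inter> Zs" using fZ Zs_sub by blast
  next
    fix p assume "p \<in> {p \<in> topspace (DD I). \<exists>x\<in>C. rep p x} \<inter> Zs"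
    then obtain x where "p \<in> Zs" "x \<in> C" "rep p x" by blast
    thus "p \<in> {x \<in> topspace ZZ. fZ x \<in> C}" using fZ_eq by (auto simp: topspace_ZZ)
  qed
  thus "closedin ZZ {x \<in> topspace ZZ. fZ x \<in> C}"
    unfolding ZZ_def closedin_subtopology using closed_rep[OF C] by (intro exI[of _ "{p \<in> topspace (DD I). \<exists>x\<in>C. rep p x}"]) simp
qed

definition topp :: "'a \<Rightarrow> ('i \<times> nat \<Rightarrow> nat)" where
  "topp x = restrict (\<lambda>m. gseq (u (fst m) x) (snd m)) (I \<times> UNIV)"

lemma topp:
  assumes x: "x \<in> topspace X"
  shows "topp x \<in> Zs" "fZ (topp x) = x" "\<forall>i\<in>I. dgood (1/4) (row (topp x) i)"
proof -
  have rowe: "row (topp x) i = gseq (u i x)" if "i \<in> I" for i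
    using that by (auto simp: row_def topp_def)
  have g: "dig (gseq (u i x)) \<and> dval (gseq (u i x)) = u i x \<and> dgood (1/4) (gseq (u i x))" if "i \<in> I" for i
    using greedy[of "1/4" "u i x"] ur[OF that x] by simp
  have "topp x \<in> topspace (DD I)"
    unfolding topspace_DD PiE_iff
  proof (intro conjI ballI)
    show "topp x \<in> extensional (I \<times> UNIV)" by (simp add: topp_def)
    fix m assume m: "m \<in> I \<times> (UNIV :: nat set)"
    have "gseq (u (fst m) x) (snd m) \<le> 2" using dig_gseq by (simp add: dig_def)
    thus "topp x m \<in> {0,1,2}" using m by (auto simp: topp_def)
  qed
  moreover have r: "rep (topp x) x" unfolding rep_def using x g rowe by simp
  ultimately show "topp x \<in> Zs" unfolding Zs_def by blast
  show "fZ (topp x) = x" using fZ_eq[OF r] .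
  show "\<forall>i\<in>I. dgood (1/4) (row (topp x) i)" using g rowe by simp
qed

lemma fZ_surj: "fZ ` Zs = topspace X"
proof
  show "fZ ` Zs \<subseteq> topspace X" using fZ by (auto simp: rep_def)
  show "topspace X \<subseteq> fZ ` Zs" using topp by (metis image_eqI subsetI)
qed

lemma WW_big: "x \<in> topspace X \<Longrightarrow> \<exists>p t. (p,t) \<in> WW x \<and> c \<le> t"
  using topp[of x] gg_lt[of c] unfolding WW_def by blast

lemma WW_sub: "fst ` WW x \<subseteq> {p \<in> Zs. fZ p = x}"
  unfolding WW_def by auto

end


lemma dgood_mono: "c \<le> c' \<Longrightarrow> dgood c' s \<Longrightarrow> dgood c s"
  unfolding dgood_def
proof
  fix j assume "c \<le> c'" "\<forall>j. c' \<le> dval (\<lambda>n. s (n + j)) \<and> dval (\<lambda>n. s (n + j)) \<le> 1 - c'"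
  thus "c \<le> dval (\<lambda>n. s (n + j)) \<and> dval (\<lambda>n. s (n + j)) \<le> 1 - c" by (metis diff_left_mono order_trans)
qed

lemma le2_in: "(n::nat) \<le> 2 \<Longrightarrow> n \<in> {0,1,2}"
  by auto

context core begin

definition hS :: "(('i \<times> nat \<Rightarrow> nat) \<Rightarrow> real) \<Rightarrow> 'a \<Rightarrow> real set" where
  "hS \<phi> x = {min (\<phi> p) t | p t. (p, t) \<in> WW x}"

lemma hS_ne: "x \<in> topspace X \<Longrightarrow> hS \<phi> x \<noteq> {}"
  unfolding hS_def using WW_big[of x 0] by blast

lemma hS_bdd:
  assumes "continuous_map ZZ euclideanreal \<phi>"
  shows "bdd_above (hS \<phi> x)"
proof -
  have "fst ` WW x \<subseteq> topspace ZZ" using WW_sub topspace_ZZ by auto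
  thus ?thesis unfolding hS_def using wmeas_bdd[OF ZZ_compact, of \<phi> "WW x"] assms
    by (simp add: Cfun_def)
qed

lemma phi_nbhd:
  assumes \<phi>: "continuous_map ZZ euclideanreal \<phi>" and p0: "p0 \<in> Zs" and a: "a < \<phi> p0"
  shows "\<exists>F k. finite F \<and> F \<subseteq> I \<and> (\<forall>q\<in>Zs. (\<forall>i\<in>F. \<forall>n<k. q (i,n) = p0 (i,n)) \<longrightarrow> a < \<phi> q)"
proof -
  have "openin euclideanreal {a<..}" by (simp flip: open_openin)
  hence "openin ZZ {q \<in> topspace ZZ. \<phi> q \<in> {a<..}}" using openin_continuous_map_preimage[OF \<phi>] by blast
  then obtain Op where Op: "openin (DD I) Op" "{q \<in> topspace ZZ. \<phi> q \<in> {a<..}} = Op \<inter> Zs"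
    unfolding ZZ_def openin_subtopology by blast
  have "p0 \<in> Op" using p0 a Op(2) topspace_ZZ by blast
  then obtain X' where X': "p0 \<in> PiE (I \<times> UNIV) X'" "\<forall>i. openin (discrete_topology {0,1,2::nat}) (X' i)"
     "finite {i. X' i \<noteq> topspace (discrete_topology {0,1,2::nat})}" "PiE (I \<times> UNIV) X' \<subseteq> Op"
    using product_topology_open_contains_basis[of "\<lambda>_. discrete_topology {0,1,2::nat}" "I \<times> UNIV" Op p0] Op(1)
    unfolding DD_def by auto
  define F0 where "F0 = {i. X' i \<noteq> topspace (discrete_topology {0,1,2::nat})}"
  have fF0: "finite F0" using X'(3) by (simp add: F0_def)
  define k where "k = Suc (Max (snd ` F0))"
  have k: "\<forall>m\<in>F0. snd m < k" unfolding k_def using fF0 by (simp add: le_imp_less_Suc)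
  define F where "F = fst ` (F0 \<inter> (I \<times> UNIV))"
  show ?thesis
  proof (intro exI conjI ballI impI)
    show "finite F" using fF0 by (simp add: F_def)
    show "F \<subseteq> I" by (auto simp: F_def)
    fix q assume q: "q \<in> Zs" and ag: "\<forall>i\<in>F. \<forall>n<k. q (i, n) = p0 (i, n)"
    have qD: "q \<in> topspace (DD I)" using q Zs_sub by auto
    have "q \<in> PiE (I \<times> UNIV) X'"
      unfolding PiE_iff
    proof (intro conjI ballI)
      show "q \<in> extensional (I \<times> UNIV)" using qD by (simp add: topspace_DD PiE_iff)
      fix m assume m: "m \<in> I \<times> (UNIV :: nat set)"
      show "q m \<in> X' m"
      proof (cases "m \<in> F0")
        case True
        obtain i n where mi: "m = (i,n)" by (cases m)
        have "i \<in> F" using True m mi by (force simp: F_def)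
        moreover have "n < k" using k True mi by force
        ultimately have "q m = p0 m" using ag mi by simp
        moreover have "p0 m \<in> X' m" using X'(1) m by (rule PiE_mem)
        ultimately show ?thesis by simp
      next
        case False
        hence "X' m = {0,1,2}" by (simp add: F0_def)
        moreover obtain i n where mi: "m = (i,n)" by (cases m)
        ultimately show ?thesis using DD_val[OF qD, of i n] m by simp
      qed
    qed
    hence "q \<in> Op \<inter> Zs" using X'(4) q by blast
    thus "a < \<phi> q" using Op(2) by blast
  qed
qed

lemma lsc:
  assumes \<phi>: "continuous_map ZZ euclideanreal \<phi>"
  shows "openin X {x \<in> topspace X. a < Sup (hS \<phi> x)}"
proof (subst openin_subopen, intro ballI)
  fix x0 assume "x0 \<in> {x \<in> topspace X. a < Sup (hS \<phi> x)}"
  hence x0: "x0 \<in> topspace X" and ax0: "a < Sup (hS \<phi> x0)" by auto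
  obtain v where "v \<in> hS \<phi> x0" "a < v" using less_cSupD[OF hS_ne[OF x0] ax0] by blast
  then obtain p0 t0 where pt0: "(p0,t0) \<in> WW x0" "a < min (\<phi> p0) t0" unfolding hS_def by blast
  then obtain c0 where p0: "p0 \<in> Zs" "fZ p0 = x0" "gg t0 < c0" "\<forall>i\<in>I. dgood c0 (row p0 i)"
    unfolding WW_def by blast
  define c where "c = min c0 (1/4)"
  have gc: "\<forall>i\<in>I. dgood c (row p0 i)" using p0(4) dgood_mono[of c c0] by (simp add: c_def)
  have c14: "c \<le> 1/4" by (simp add: c_def)
  have gtc: "gg t0 < c" using p0(3) gg_lt[of t0] by (simp add: c_def)
  define \<eta> where "\<eta> = (c - gg t0) / 2"
  have eta: "0 < \<eta>" "\<eta> < c" "gg t0 < c - \<eta>" using gtc gg_pos[of t0] unfolding \<eta>_def by (simp_all add: field_simps)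
  obtain F k where Fk: "finite F" "F \<subseteq> I" "\<forall>q\<in>Zs. (\<forall>i\<in>F. \<forall>n<k. q (i,n) = p0 (i,n)) \<longrightarrow> a < \<phi> q"
    using phi_nbhd[OF \<phi> p0(1), of a] pt0(2) by auto
  have rp0: "rep p0 x0" using fZ[OF p0(1)] p0(2) by simp
  define T where "T = {x \<in> topspace X. \<forall>i\<in>F. \<bar>u i x - u i x0\<bar> < \<eta> / 2^k}"
  have oT: "openin X T"
    unfolding T_def
  proof (rule openin_finite_all[OF Fk(1)])
    fix i assume "i \<in> F"
    hence ci: "continuous_map X euclideanreal (\<lambda>x. \<bar>u i x - u i x0\<bar>)"
      using uc Fk(2) by (intro continuous_map_real_abs continuous_map_diff) auto
    have "openin euclideanreal {..< \<eta> / 2^k}" by (simp flip: open_openin)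
    from openin_continuous_map_preimage[OF ci this]
    show "openin X {x \<in> topspace X. \<bar>u i x - u i x0\<bar> < \<eta> / 2^k}" by simp
  qed
  have x0T: "x0 \<in> T" using x0 eta by (simp add: T_def)
  have "T \<subseteq> {x \<in> topspace X. a < Sup (hS \<phi> x)}"
  proof
    fix x assume xT: "x \<in> T"
    hence x: "x \<in> topspace X" by (simp add: T_def)
    have "\<forall>i\<in>I. \<exists>s. dig s \<and> dval s = u i x \<and> dgood (c - \<eta>) s \<and> (i \<in> F \<longrightarrow> (\<forall>n<k. s n = p0 (i,n)))"
    proof
      fix i assume i: "i \<in> I"
      show "\<exists>s. dig s \<and> dval s = u i x \<and> dgood (c - \<eta>) s \<and> (i \<in> F \<longrightarrow> (\<forall>n<k. s n = p0 (i,n)))"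
      proof (cases "i \<in> F")
        case True
        have "\<bar>u i x - dval (row p0 i)\<bar> \<le> \<eta> / 2^k"
          using xT True i rp0 unfolding T_def rep_def by force
        then obtain s where "dig s" "\<forall>n<k. s n = row p0 i n" "dval s = u i x" "dgood (c - \<eta>) s"
          using splice[OF dig_row[OF _ i] _ eta(1,2) c14, of p0 "u i x" k] gc i p0(1) Zs_sub by blast
        thus ?thesis by (auto simp: row_def)
      next
        case False
        have g: "dig (gseq (u i x)) \<and> dval (gseq (u i x)) = u i x \<and> dgood (1/4) (gseq (u i x))"
          using greedy[of "1/4" "u i x"] ur[OF i x] by simp
        hence "dgood (c - \<eta>) (gseq (u i x))" using dgood_mono[of "c - \<eta>" "1/4"] c14 eta by auto
        thus ?thesis using g False by blast
      qed
    qed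
    then obtain S where S: "\<forall>i\<in>I. dig (S i) \<and> dval (S i) = u i x \<and> dgood (c - \<eta>) (S i) \<and> (i \<in> F \<longrightarrow> (\<forall>n<k. S i n = p0 (i,n)))"
      by metis
    define p' where "p' = restrict (\<lambda>m. S (fst m) (snd m)) (I \<times> UNIV)"
    have rowp': "row p' i = S i" if "i \<in> I" for i using that by (auto simp: row_def p'_def)
    have "p' \<in> topspace (DD I)"
      unfolding topspace_DD PiE_iff
    proof (intro conjI ballI)
      show "p' \<in> extensional (I \<times> UNIV)" by (simp add: p'_def)
      fix m assume m: "m \<in> I \<times> (UNIV :: nat set)"
      hence "S (fst m) (snd m) \<le> 2" using S by (auto simp: dig_def)
      thus "p' m \<in> {0,1,2}" using m by (auto simp: p'_def)
    qed
    moreover have rp: "rep p' x" unfolding rep_def using x S rowp' by simp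
    ultimately have p'Z: "p' \<in> Zs" unfolding Zs_def by blast
    have "(p', t0) \<in> WW x" unfolding WW_def using p'Z fZ_eq[OF rp] eta(3) S rowp' by auto
    moreover have "a < \<phi> p'"
    proof -
      have "\<forall>i\<in>F. \<forall>n<k. p' (i,n) = p0 (i,n)" using S Fk(2) by (auto simp: p'_def)
      thus ?thesis using Fk(3) p'Z by blast
    qed
    ultimately have "a < min (\<phi> p') t0" "min (\<phi> p') t0 \<in> hS \<phi> x" using pt0(2) unfolding hS_def by auto
    hence "a < Sup (hS \<phi> x)" using less_cSup_iff[OF hS_ne[OF x] hS_bdd[OF \<phi>]] by blast
    thus "x \<in> {x \<in> topspace X. a < Sup (hS \<phi> x)}" using x by simp
  qed
  thus "\<exists>T. openin X T \<and> x0 \<in> T \<and> T \<subseteq> {x \<in> topspace X. a < Sup (hS \<phi> x)}"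
    using oT x0T by blast
qed


lemma usc:
  assumes \<phi>: "continuous_map ZZ euclideanreal \<phi>"
  shows "openin X {x \<in> topspace X. Sup (hS \<phi> x) < a}"
proof (subst openin_subopen, intro ballI)
  fix x0 assume "x0 \<in> {x \<in> topspace X. Sup (hS \<phi> x) < a}"
  hence x0: "x0 \<in> topspace X" and ax0: "Sup (hS \<phi> x0) < a" by auto
  define b where "b = (Sup (hS \<phi> x0) + a) / 2"
  have b: "Sup (hS \<phi> x0) < b" "b < a" using ax0 by (auto simp: b_def)
  define C where "C = {p \<in> Zs. b \<le> \<phi> p \<and> (\<forall>i\<in>I. dgood (gg b) (row p i))}"
  have C1: "closedin ZZ {p \<in> topspace ZZ. \<phi> p \<in> {b..}}"
    by (rule closedin_continuous_map_preimage[OF \<phi>]) (simp flip: closed_closedin)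
  have C2: "closedin (DD I) {p \<in> topspace (DD I). \<forall>m\<in>I \<times> UNIV.
               dval (\<lambda>n. p (fst m, n + snd m)) \<in> {gg b..1 - gg b}}"
  proof (rule closedin_all)
    fix m assume m: "m \<in> I \<times> (UNIV :: nat set)"
    have "closedin euclideanreal {gg b..1 - gg b}" by (simp flip: closed_closedin)
    thus "closedin (DD I) {p \<in> topspace (DD I). dval (\<lambda>n. p (fst m, n + snd m)) \<in> {gg b..1 - gg b}}"
      using m by (intro closedin_continuous_map_preimage[OF DD_cont_row]) auto
  qed
  have "C = {p \<in> topspace ZZ. \<phi> p \<in> {b..}} \<inter>
            ({p \<in> topspace (DD I). \<forall>m\<in>I \<times> UNIV. dval (\<lambda>n. p (fst m, n + snd m)) \<in> {gg b..1 - gg b}} \<inter> Zs)"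
    unfolding C_def topspace_ZZ using Zs_sub by (auto simp: dgood_def row_def)
  moreover have "closedin ZZ ({p \<in> topspace (DD I). \<forall>m\<in>I \<times> UNIV. dval (\<lambda>n. p (fst m, n + snd m)) \<in> {gg b..1 - gg b}} \<inter> Zs)"
    unfolding ZZ_def closedin_subtopology using C2 by blast
  ultimately have "closedin ZZ C" using C1 by (simp add: closedin_Int)
  hence "compactin ZZ C" using ZZ_compact by (simp add: closedin_compact_space)
  hence "compactin X (fZ ` C)" using fZ_cont by (rule image_compactin)
  hence clC: "closedin X (fZ ` C)" using hX by (simp add: compactin_imp_closedin)
  have x0C: "x0 \<notin> fZ ` C"
  proof
    assume "x0 \<in> fZ ` C"
    then obtain p where p: "p \<in> C" "fZ p = x0" by blast
    define t where "t = (Sup (hS \<phi> x0) + b) / 2"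
    have t: "Sup (hS \<phi> x0) < t" "t < b" using b by (auto simp: t_def)
    have "(p, t) \<in> WW x0" unfolding WW_def using p gg_mono[OF t(2)] by (auto simp: C_def)
    hence "min (\<phi> p) t \<in> hS \<phi> x0" unfolding hS_def by blast
    hence "min (\<phi> p) t \<le> Sup (hS \<phi> x0)" using hS_bdd[OF \<phi>] by (rule cSup_upper)
    moreover have "min (\<phi> p) t = t" using p t by (auto simp: C_def)
    ultimately show False using t by simp
  qed
  define T where "T = topspace X - fZ ` C"
  have oT: "openin X T" using clC unfolding T_def closedin_def by simp
  have "T \<subseteq> {x \<in> topspace X. Sup (hS \<phi> x) < a}"
  proof
    fix x assume xT: "x \<in> T"
    hence x: "x \<in> topspace X" by (simp add: T_def)
    have "Sup (hS \<phi> x) \<le> b"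
    proof (rule cSup_least[OF hS_ne[OF x]])
      fix v assume "v \<in> hS \<phi> x"
      then obtain p t where pt: "(p,t) \<in> WW x" "v = min (\<phi> p) t" unfolding hS_def by blast
      then obtain c where pc: "p \<in> Zs" "fZ p = x" "gg t < c" "\<forall>i\<in>I. dgood c (row p i)"
        unfolding WW_def by blast
      show "v \<le> b"
      proof (rule ccontr)
        assume "\<not> v \<le> b"
        hence vb: "b < \<phi> p" "b < t" using pt(2) by auto
        have "gg b < c" using gg_mono[OF vb(2)] pc(3) by simp
        hence "\<forall>i\<in>I. dgood (gg b) (row p i)" using pc(4) dgood_mono[of "gg b" c] by auto
        hence "p \<in> C" using pc vb by (auto simp: C_def)
        hence "x \<in> fZ ` C" using pc(2) by blast
        thus False using xT by (simp add: T_def)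
      qed
    qed
    thus "x \<in> {x \<in> topspace X. Sup (hS \<phi> x) < a}" using x b by simp
  qed
  thus "\<exists>T. openin X T \<and> x0 \<in> T \<and> T \<subseteq> {x \<in> topspace X. Sup (hS \<phi> x) < a}"
    using oT x0 x0C by (auto simp: T_def)
qed

lemma hcont:
  assumes \<phi>: "continuous_map ZZ euclideanreal \<phi>"
  shows "continuous_map X euclideanreal (\<lambda>x. Sup (hS \<phi> x))"
  unfolding continuous_map_upper_lower_semicontinuous_lt
  using lsc[OF \<phi>] usc[OF \<phi>] by blast

end

lemma finite_case:
  fixes X :: "'a topology"
  assumes cX: "compact_space X" and hX: "Hausdorff_space X" and fin: "finite (topspace X)"
  shows "\<exists>(Z :: 'a set set set topology) f.
           compact_space Z \<and> Hausdorff_space Z \<and> zero_dimensional Z \<and>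
           maxmin_milyutin Z X f"
proof -
  define E :: "'a \<Rightarrow> 'a set set set" where "E x = {{{x}}}" for x
  have injE: "inj E" unfolding E_def by (rule injI) simp
  define Zt where "Zt = E ` topspace X"
  define Z where "Z = discrete_topology Zt"
  define F where "F = inv_into (topspace X) E"
  define W where "W x = {(E x, t) | t::real. True}" for x
  define s where "s x = wmeas Z (W x)" for x
  have FE: "F (E x) = x" if "x \<in> topspace X" for x
    unfolding F_def using injE that by (simp add: inv_into_f_f inj_on_subset)
  have cZ: "compact_space Z" unfolding Z_def Zt_def using fin by (simp add: compact_space_discrete_topology)
  have hZ: "Hausdorff_space Z" unfolding Z_def by simp
  have zZ: "zero_dimensional Z"
    unfolding Z_def zero_dimensional_def neighbourhood_base_of_discrete_topology by simp
  have big: "\<exists>p t. (p,t) \<in> W x \<and> c \<le> t" for x c unfolding W_def by blast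
  have Wsub: "fst ` W x \<subseteq> {z \<in> topspace Z. F z = x}" if "x \<in> topspace X" for x
    using that FE unfolding W_def Z_def Zt_def by auto
  have JS: "s x \<in> Jset Z" if "x \<in> topspace X" for x
    unfolding s_def using wmeas_Jset[OF cZ _ big] Wsub[OF that] by blast
  have JB: "s x \<in> Jsub Z {z \<in> topspace Z. F z = x}" if "x \<in> topspace X" for x
    unfolding s_def
  proof (rule wmeas_Jsub[OF cZ _ Wsub[OF that] big])
    show "closedin Z {z \<in> topspace Z. F z = x}" unfolding Z_def by auto
  qed
  have Xd: "X = discrete_topology (topspace X)"
    using finite_t1_space_imp_discrete_topology[OF refl fin Hausdorff_imp_t1_space[OF hX]] .
  have "continuous_map (discrete_topology (topspace X)) (Jtop Z) s"
  proof -
    have "s x \<in> topspace (Jtop Z)" if "x \<in> topspace X" for x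
      unfolding Jtop_def using JS[OF that] by (auto simp: s_def wmeas_def)
    thus ?thesis by auto
  qed
  hence cs: "continuous_map X (Jtop Z) s" using Xd by simp
  have cF: "continuous_map Z X F"
    unfolding Z_def Zt_def F_def by (auto intro: inv_into_into)
  have sF: "F ` topspace Z = topspace X"
    unfolding Z_def Zt_def using FE by (auto simp: F_def intro: inv_into_into) (metis image_eqI)
  have "maxmin_milyutin Z X F"
    unfolding maxmin_milyutin_def using cF sF cs JB by blast
  thus ?thesis using cZ hZ zZ by blast
qed


context core begin

lemma transport:
  fixes enc :: "('i \<times> nat \<Rightarrow> nat) \<Rightarrow> 'c"
  assumes inj: "inj_on enc Zs"
  shows "\<exists>(Z :: 'c topology) f. compact_space Z \<and> Hausdorff_space Z \<and> zero_dimensional Z \<and> maxmin_milyutin Z X f"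
proof -
  define dec where "dec = inv_into Zs enc"
  define T where "T = pullback_topology (enc ` Zs) dec ZZ"
  have de: "dec (enc p) = p" if "p \<in> Zs" for p using inj that by (simp add: dec_def)
  have ed: "enc (dec y) = y" if "y \<in> enc ` Zs" for y using that by (simp add: dec_def f_inv_into_f)
  have tT: "topspace T = enc ` Zs"
    unfolding T_def topspace_pullback_topology topspace_ZZ using de by auto
  have c1: "continuous_map T ZZ dec"
    using continuous_map_pullback[OF continuous_map_id, of "enc ` Zs" dec ZZ] by (simp add: T_def)
  have c2: "continuous_map ZZ T enc"
    unfolding T_def
  proof (rule continuous_map_pullback')
    show "continuous_map ZZ ZZ (dec \<circ> enc)"
      by (rule continuous_map_eq[OF continuous_map_id]) (simp add: de topspace_ZZ)
    show "topspace ZZ \<subseteq> enc -` (enc ` Zs)" by (auto simp: topspace_ZZ)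
  qed
  have hm: "homeomorphic_maps ZZ T enc dec"
    unfolding homeomorphic_maps_def using c1 c2 de ed tT topspace_ZZ by auto
  have hs: "ZZ homeomorphic_space T" using hm unfolding homeomorphic_space_def by blast
  have cT: "compact_space T" using ZZ_compact homeomorphic_compact_space[OF hs] by simp
  have hT: "Hausdorff_space T" using ZZ_Hausdorff homeomorphic_Hausdorff_space[OF hs] by simp
  have zT: "zero_dimensional T"
    using zero_dim_homeomorphic_map[OF _ ZZ_zero_dim] hm homeomorphic_map_maps by blast
  define F where "F = fZ \<circ> dec"
  have cF: "continuous_map T X F" unfolding F_def using c1 fZ_cont by (rule continuous_map_compose)
  have sF: "F ` topspace T = topspace X"
    unfolding tT F_def using de fZ_surj by (simp add: image_comp[symmetric] image_image)
  define W' where "W' x = (\<lambda>(p,t). (enc p, t)) ` WW x" for x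
  define s where "s x = wmeas T (W' x)" for x
  have big: "\<exists>p t. (p,t) \<in> W' x \<and> c \<le> t" if x: "x \<in> topspace X" for x c
  proof -
    obtain p t where "(p,t) \<in> WW x" "c \<le> t" using WW_big[OF x] by blast
    thus ?thesis unfolding W'_def by force
  qed
  have Wsub: "fst ` W' x \<subseteq> {z \<in> topspace T. F z = x}" for x
    using WW_sub[of x] de unfolding W'_def F_def tT by force
  have JS: "s x \<in> Jset T" if "x \<in> topspace X" for x
    unfolding s_def using wmeas_Jset[OF cT _ big[OF that]] Wsub[of x] by blast
  have JB: "s x \<in> Jsub T {z \<in> topspace T. F z = x}" if "x \<in> topspace X" for x
    unfolding s_def
  proof (rule wmeas_Jsub[OF cT _ Wsub big[OF that]])
    have "closedin X {x}" using that hX Hausdorff_imp_t1_space t1_space_closedin_singleton by metis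
    from closedin_continuous_map_preimage[OF cF this]
    show "closedin T {z \<in> topspace T. F z = x}" by simp
  qed
  have cs: "continuous_map X (Jtop T) s"
    unfolding Jtop_def continuous_map_in_subtopology
  proof (intro conjI)
    show "s \<in> topspace X \<rightarrow> Jset T" using JS by blast
    show "continuous_map X (product_topology (\<lambda>_. euclideanreal) (Cfun T)) s"
      unfolding continuous_map_componentwise
    proof (intro conjI ballI)
      show "s ` topspace X \<subseteq> extensional (Cfun T)" by (auto simp: s_def wmeas_def)
      fix \<phi> assume \<phi>: "\<phi> \<in> Cfun T"
      have c\<phi>: "continuous_map ZZ euclideanreal (\<phi> \<circ> enc)"
        using c2 \<phi> by (simp add: Cfun_def continuous_map_compose)
      have "(\<lambda>x. s x \<phi>) = (\<lambda>x. Sup (hS (\<phi> \<circ> enc) x))"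
      proof
        fix x
        have "{min (\<phi> q) t | q t. (q,t) \<in> W' x} = hS (\<phi> \<circ> enc) x"
          unfolding W'_def hS_def by force
        thus "s x \<phi> = Sup (hS (\<phi> \<circ> enc) x)" using \<phi> by (simp add: s_def wmeas_def)
      qed
      thus "continuous_map X euclideanreal (\<lambda>x. s x \<phi>)" using hcont[OF c\<phi>] by simp
    qed
  qed
  have "maxmin_milyutin T X F"
    unfolding maxmin_milyutin_def using cF sF cs JB by blast
  thus ?thesis using cT hT zT by blast
qed

end


lemma arith3: "3 * (n::nat) + a = 3 * n' + b \<Longrightarrow> a \<le> 2 \<Longrightarrow> b \<le> 2 \<Longrightarrow> n = n' \<and> a = b"
  by presburger

lemma infinite_case:
  fixes X :: "'a topology"
  assumes cX: "compact_space X" and hX: "Hausdorff_space X" and inf: "infinite (topspace X)"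
  shows "\<exists>(Z :: 'a set set set topology) f.
           compact_space Z \<and> Hausdorff_space Z \<and> zero_dimensional Z \<and>
           maxmin_milyutin Z X f"
proof -
  obtain e :: "nat \<Rightarrow> 'a" where e: "inj e" using infinite_iff_countable_subset[THEN iffD1, OF inf] by blast
  define I where "I = {{x,y} | x y. x \<in> topspace X \<and> y \<in> topspace X \<and> x \<noteq> y}"
  define P where "P i g \<longleftrightarrow> continuous_map X euclideanreal g \<and> (\<forall>x\<in>topspace X. 1/4 \<le> g x \<and> g x \<le> 3/4)
                     \<and> (\<forall>x\<in>i. \<forall>y\<in>i. x \<noteq> y \<longrightarrow> g x \<noteq> g y)" for i g
  define u where "u i = (SOME g. P i g)" for i
  have nX: "normal_space X" using cX hX by (simp add: compact_Hausdorff_or_regular_imp_normal_space)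
  have t1: "t1_space X" using hX by (rule Hausdorff_imp_t1_space)
  have ex: "\<exists>g. P i g" if iI: "i \<in> I" for i
  proof -
    obtain x y where xy: "i = {x,y}" "x \<in> topspace X" "y \<in> topspace X" "x \<noteq> y"
      using iI unfolding I_def by blast
    have cx: "closedin X {x}" "closedin X {y}" using t1 xy(2,3) unfolding t1_space_closedin_singleton by auto
    obtain f where f: "continuous_map X (top_of_set {1/4..3/4::real}) f" "f ` {x} \<subseteq> {1/4}" "f ` {y} \<subseteq> {3/4}"
      using Urysohn_lemma[OF nX cx(1) cx(2), of "1/4" "3/4"] xy(4) by auto
    have "continuous_map X euclideanreal f" "f \<in> topspace X \<rightarrow> {1/4..3/4}"
      using f(1) by (simp_all add: continuous_map_in_subtopology)
    moreover have "f x = 1/4" "f y = 3/4" using f(2,3) by auto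
    ultimately have "P i f" unfolding P_def xy(1) by auto
    thus ?thesis by blast
  qed
  have uP: "P i (u i)" if "i \<in> I" for i unfolding u_def using someI_ex[OF ex[OF that]] .
  interpret core X I u
  proof
    show "compact_space X" "Hausdorff_space X" by (rule cX, rule hX)
    fix i assume "i \<in> I"
    thus "continuous_map X euclideanreal (u i)" using uP unfolding P_def by blast
    fix x assume "x \<in> topspace X"
    thus "1/4 \<le> u i x \<and> u i x \<le> 3/4" using uP[OF \<open>i \<in> I\<close>] unfolding P_def by blast
  next
    fix x y assume xy: "x \<in> topspace X" "y \<in> topspace X" "x \<noteq> y"
    hence "{x,y} \<in> I" unfolding I_def by blast
    moreover have "u {x,y} x \<noteq> u {x,y} y" using uP[OF \<open>{x,y} \<in> I\<close>] xy(3) unfolding P_def by blast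
    ultimately show "\<exists>i\<in>I. u i x \<noteq> u i y" by blast
  qed
  define M where "M k = e ` {..k+2}" for k
  have cardM: "card (M k) = k + 3" for k
    unfolding M_def using e by (simp add: card_image inj_on_subset)
  have cardI: "card i = 2" if "i \<in> I" for i using that unfolding I_def by auto
  define enc :: "('a set \<times> nat \<Rightarrow> nat) \<Rightarrow> 'a set set set"
    where "enc p = {{i, M (3*n + p (i,n))} | i n. i \<in> I}" for p
  have "inj_on enc Zs"
  proof (rule inj_onI)
    fix p q assume p: "p \<in> Zs" and q: "q \<in> Zs" and eq: "enc p = enc q"
    have pD: "p \<in> topspace (DD I)" and qD: "q \<in> topspace (DD I)" using p q Zs_sub by auto
    show "p = q"
    proof
      fix m
      show "p m = q m"
      proof (cases "m \<in> I \<times> (UNIV :: nat set)")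
        case True
        obtain i n where mi: "m = (i,n)" "i \<in> I" using True by auto
        have "{i, M (3*n + p (i,n))} \<in> enc q" using eq[symmetric] mi unfolding enc_def by blast
        then obtain i' n' where i': "i' \<in> I" "{i, M (3*n + p (i,n))} = {i', M (3*n' + q (i',n'))}"
          unfolding enc_def by blast
        have ne: "i \<noteq> M k" for k using cardI[OF mi(2)] cardM[of k] by auto
        from i'(2) have "i = i' \<and> M (3*n + p (i,n)) = M (3*n' + q (i',n'))"
          using ne by (auto simp: doubleton_eq_iff)
        hence ii: "i = i'" and "card (M (3*n + p (i,n))) = card (M (3*n' + q (i,n')))" by auto
        hence "3*n + p (i,n) = 3*n' + q (i,n')" using cardM by simp
        moreover have "p (i,n) \<le> 2" "q (i,n') \<le> 2"
          using DD_val[OF pD mi(2), of n] DD_val[OF qD mi(2), of n'] by auto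
        ultimately have "n = n' \<and> p (i,n) = q (i,n')" by (rule arith3)
        thus ?thesis using mi by auto
      next
        case False
        have "p \<in> extensional (I \<times> UNIV)" "q \<in> extensional (I \<times> UNIV)"
          using pD qD by (auto simp: topspace_DD PiE_iff)
        thus ?thesis using extensional_arb[OF _ False] by metis
      qed
    qed
  qed
  from transport[OF this] show ?thesis .
qed

theorem mainTheorem7:
  fixes X :: "'a topology"
  assumes "compact_space X" and "Hausdorff_space X"
  shows "\<exists>(Z :: 'a set set set topology) f.
           compact_space Z \<and> Hausdorff_space Z \<and> zero_dimensional Z \<and>
           maxmin_milyutin Z X f"
proof (cases "finite (topspace X)")
  case True show ?thesis using finite_case[OF assms True] .
next
  case False show ?thesis using infinite_case[OF assms False] .
qed


end
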